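(* For $k \in \mathbb{N}_0$ and $N \in \mathbb{N}$ (with the convention that $(-1)!!=1$) it holds that \begin{equation*} \lim_{t \searrow 0} \frac{1}{t^k} G^{N,1}_{1,N} \left(\frac{1}{2^N t} \Bigg| \begin{matrix} 1-k \\ 1/2,1/2, \dots, 1/2 \end{matrix} \right) = \left[\sqrt{\pi}(2k-1)!!\right]^N. \end{equation*}
   Context: $n!!$ denotes the double factorial $n(n-2)(n-4)\cdots$. $G_{p,q}^{m,n}\left(z \Big| \begin{matrix} a_1,\ldots, a_p \\ b_1,\ldots, b_q\end{matrix}\right)$ is the Meijer G-function, defined by the contour integral $\frac{1}{2\pi \mathrm{i}} \int_{\mathcal{L}} \frac{\prod_{j=1}^m \Gamma(b_j+s) \prod_{i=1}^n \Gamma(1-a_i-s)}{\prod_{i=n+1}^p \Gamma(a_i+s) \prod_{j=m+1}^q \Gamma(1-b_j-s)} z^{-s} \, \mathrm{d} s$ over a contour $\mathcal{L}$ separating the poles of the $\Gamma(b_j+s)$ from those of the $\Gamma(1-a_i-s)$. It is derived from the fact that, for $Y=\prod_{i=1}^N g_i^2$ with $g_i$ iid standard Gaussian, $\mathbb{E}\, \mathrm{e}^{-tY} = \pi^{-N/2} G^{N,1}_{1,N}\left(\frac{1}{2^N t} \Big| \begin{matrix} 1 \\ 1/2,\dots,1/2\end{matrix}\right)$ for $t>0$ and $\mathbb{E}[Y^k]=[(2k-1)!!]^N$. *)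

theory Defs
  imports "HOL-Analysis.Analysis"
begin

text \<open>Double factorial n!! = n (n-2) (n-4) ..., with 0!! = 1!! = 1.
  Since nat subtraction truncates, dfact (2*0 - 1) = dfact 0 = 1,
  which realises the convention (-1)!! = 1.\<close>
fun dfact :: "nat \<Rightarrow> nat" where
  "dfact 0 = 1"
| "dfact (Suc 0) = 1"
| "dfact (Suc (Suc n)) = Suc (Suc n) * dfact n"

text \<open>Meijer G-function G^{m,n}_{p,q}(z | a_1..a_p ; b_1..b_q) for real z > 0,
  given by the contour integral (1/(2 pi i)) \<integral>_L ... z^(-s) ds where the contour L
  is the vertical line Re s = c (traversed upwards), s = c + i y.
  Parameters are indexed from 0: a 0, ..., a (p-1) and b 0, ..., b (q-1).
  With s = c + i y we have ds = i dy, so the prefactor becomes 1/(2 pi).\<close>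
definition meijerG_line ::
  "nat \<Rightarrow> nat \<Rightarrow> nat \<Rightarrow> nat \<Rightarrow> (nat \<Rightarrow> complex) \<Rightarrow> (nat \<Rightarrow> complex) \<Rightarrow> real \<Rightarrow> real \<Rightarrow> complex"
  where
  "meijerG_line m n p q a b c z =
     (LINT y|lborel.
        (let s = Complex c y in
          (\<Prod>j<m. Gamma (b j + s)) * (\<Prod>i<n. Gamma (1 - a i - s))
          * (\<Prod>i\<in>{n..<p}. rGamma (a i + s)) * (\<Prod>j\<in>{m..<q}. rGamma (1 - b j - s))
          * complex_of_real z powr (- s)))
     / complex_of_real (2 * pi)"

end

theory Submission
  imports Defs "HOL-Complex_Analysis.Complex_Analysis" "HOL-Probability.Sinc_Integral"
begin

lemma norm_pochhammer_ge:
  fixes z :: complex assumes "Re z > 0"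
  shows "pochhammer (Re z) n \<le> norm (pochhammer z n)"
proof -
  have "pochhammer (Re z) n = (\<Prod>i<n. Re z + of_nat i)" by (simp add: pochhammer_prod atLeast0LessThan)
  also have "\<dots> \<le> (\<Prod>i<n. norm (z + of_nat i))"
  proof (rule prod_mono)
    fix i assume "i \<in> {..<n}"
    have "Re z + of_nat i = Re (z + of_nat i)" by simp
    also have "\<dots> \<le> norm (z + of_nat i)" by (rule complex_Re_le_cmod)
    finally show "0 \<le> Re z + real i \<and> Re z + real i \<le> cmod (z + of_nat i)" using assms by simp
  qed
  also have "\<dots> = norm (pochhammer z n)" by (simp add: pochhammer_prod prod_norm atLeast0LessThan)
  finally show ?thesis .
qed

lemma norm_Gamma_le:
  fixes z :: complex assumes "Re z > 0"
  shows "norm (Gamma z) \<le> Gamma (Re z)"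
proof (rule tendsto_le[OF trivial_limit_sequentially])
  show "(\<lambda>n. norm (Gamma_series z n)) \<longlonglongrightarrow> norm (Gamma z)"
    by (intro tendsto_norm Gamma_series_LIMSEQ)
  show "(\<lambda>n. Gamma_series (Re z) n) \<longlonglongrightarrow> Gamma (Re z)"
    by (rule Gamma_series_LIMSEQ)
  show "\<forall>\<^sub>F n in sequentially. norm (Gamma_series z n) \<le> Gamma_series (Re z) n"
  proof (rule always_eventually, rule allI)
    fix n
    have p: "pochhammer (Re z) (n+1) > 0" using assms by (intro pochhammer_pos) auto
    have "norm (Gamma_series z n) = fact n * exp (Re z * ln (of_nat n)) / norm (pochhammer z (n+1))"
      by (simp add: Gamma_series_def norm_divide norm_mult)
    also have "\<dots> \<le> fact n * exp (Re z * ln (of_nat n)) / pochhammer (Re z) (n+1)"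
    proof -
      have q: "pochhammer (Re z) (n+1) \<le> norm (pochhammer z (n+1))" by (rule norm_pochhammer_ge[OF assms])
      show ?thesis using p q by (intro divide_left_mono mult_pos_pos) auto
    qed
    also have "\<dots> = Gamma_series (Re z) n" by (simp add: Gamma_series_def)
    finally show "norm (Gamma_series z n) \<le> Gamma_series (Re z) n" .
  qed
qed

lemma Gamma_bounded_interval:
  fixes \<alpha> \<beta> :: real assumes "0 < \<alpha>"
  shows "\<exists>B>0. \<forall>u\<in>{\<alpha>..\<beta>}. Gamma u \<le> B"
proof -
  have "{\<alpha>..\<beta>} \<inter> \<int>\<^sub>\<le>\<^sub>0 = {}" using assms by (auto elim!: nonpos_Ints_cases)
  hence "continuous_on {\<alpha>..\<beta>} (Gamma :: real \<Rightarrow> real)" by (intro continuous_on_Gamma)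
  hence "compact (Gamma ` {\<alpha>..\<beta>} :: real set)" by (intro compact_continuous_image) auto
  hence "bounded (Gamma ` {\<alpha>..\<beta>} :: real set)" by (rule compact_imp_bounded)
  then obtain B where "B > 0" "\<forall>x\<in>Gamma ` {\<alpha>..\<beta>}. norm (x::real) \<le> B" by (auto simp: bounded_pos)
  thus ?thesis by (intro exI[of _ B]) auto
qed

lemma norm_Gamma_le':
  fixes z :: complex assumes "Re z > 0"
  shows "norm (Gamma z) \<le> Gamma (Re z + 1) / norm z"
proof -
  have zn: "z \<notin> \<int>\<^sub>\<le>\<^sub>0" using assms by (auto elim!: nonpos_Ints_cases)
  have z0: "z \<noteq> 0" using assms by auto
  have "Gamma (z + 1) = z * Gamma z" by (rule Gamma_plus1[OF zn])
  hence "norm (Gamma z) = norm (Gamma (z+1)) / norm z" using z0 by (simp add: norm_mult field_simps)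
  also have "\<dots> \<le> Gamma (Re z + 1) / norm z"
    using norm_Gamma_le[of "z+1"] assms z0 by (intro divide_right_mono) auto
  finally show ?thesis .
qed

definition HH :: "nat \<Rightarrow> nat \<Rightarrow> real \<Rightarrow> complex \<Rightarrow> complex" where
  "HH k N w s = Gamma (1/2 + s) ^ N * Gamma (of_nat k + 1 - s) * exp (s * of_real (ln w))"

lemma HH_bound:
  fixes a b w :: real and k N :: nat
  assumes "-1/2 < a" "a \<le> b" "b < real k + 1"
  shows "\<exists>B>0. \<forall>s. a \<le> Re s \<and> Re s \<le> b \<longrightarrow> norm (HH k N w s) \<le> B / norm (of_nat k + 1 - s)"
proof -
  obtain B1 where B1: "B1 > 0" "\<forall>u\<in>{1/2+a..1/2+b}. Gamma u \<le> B1"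
    using Gamma_bounded_interval[of "1/2+a" "1/2+b"] assms by auto
  obtain B2 where B2: "B2 > 0" "\<forall>u\<in>{real k + 2 - b..real k + 2 - a}. Gamma u \<le> B2"
    using Gamma_bounded_interval[of "real k + 2 - b" "real k + 2 - a"] assms by auto
  define B3 where "B3 = exp (a * ln w) + exp (b * ln w)"
  have B3: "B3 > 0" unfolding B3_def by (intro add_pos_pos) auto
  show ?thesis
  proof (intro exI[of _ "B1^N * B2 * B3"] conjI allI impI)
    show "B1^N * B2 * B3 > 0" using B1 B2 B3 by auto
    fix s :: complex assume s: "a \<le> Re s \<and> Re s \<le> b"
    have g1: "norm (Gamma (1/2 + s)) \<le> B1"
    proof -
      have "norm (Gamma (1/2 + s)) \<le> Gamma (Re (1/2 + s))" using s assms by (intro norm_Gamma_le) auto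
      also have "\<dots> \<le> B1" using B1 s by auto
      finally show ?thesis .
    qed
    have g2: "norm (Gamma (of_nat k + 1 - s)) \<le> B2 / norm (of_nat k + 1 - s)"
    proof -
      have "norm (Gamma (of_nat k + 1 - s)) \<le> Gamma (Re (of_nat k + 1 - s) + 1) / norm (of_nat k + 1 - s)"
        using s assms by (intro norm_Gamma_le') auto
      also have "\<dots> \<le> B2 / norm (of_nat k + 1 - s)"
        using B2 s by (intro divide_right_mono) auto
      finally show ?thesis .
    qed
    have g3: "norm (exp (s * of_real (ln w))) \<le> B3"
    proof -
      have "norm (exp (s * of_real (ln w))) = exp (Re s * ln w)" by simp
      also have "\<dots> \<le> B3"
      proof (cases "ln w \<ge> 0")
        case True
        hence "exp (Re s * ln w) \<le> exp (b * ln w)" using s by (auto intro: mult_right_mono)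
        thus ?thesis unfolding B3_def by (smt (verit) exp_gt_zero)
      next
        case False
        hence "exp (Re s * ln w) \<le> exp (a * ln w)" using s
          by (auto intro!: mult_right_mono_neg)
        thus ?thesis unfolding B3_def by (smt (verit) exp_gt_zero)
      qed
      finally show ?thesis .
    qed
    have "norm (HH k N w s) = norm (Gamma (1/2 + s)) ^ N * norm (Gamma (of_nat k + 1 - s)) * norm (exp (s * of_real (ln w)))"
      by (simp add: HH_def norm_mult norm_power)
    also have "\<dots> \<le> B1 ^ N * (B2 / norm (of_nat k + 1 - s)) * B3"
      using g1 g2 g3 B1 B2 by (intro mult_mono power_mono) auto
    finally show "norm (HH k N w s) \<le> B1^N * B2 * B3 / norm (of_nat k + 1 - s)" by simp
  qed
qed

lemma Re_pos_not_nonpos_Ints: "Re (z::complex) > 0 \<Longrightarrow> z \<notin> \<int>\<^sub>\<le>\<^sub>0"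
  by (auto elim!: nonpos_Ints_cases)

lemma HH_holo:
  "HH k N w holomorphic_on {s. -1/2 < Re s \<and> Re s < real k + 1}"
  unfolding HH_def[abs_def]
  by (intro holomorphic_intros; auto intro!: Re_pos_not_nonpos_Ints)

lemma rect_identity:
  fixes a b w T :: real and k N :: nat
  assumes ab: "-1/2 < a" "a < real k" "real k < b" "b < real k + 1" and T: "T > 0"
  defines "f \<equiv> (\<lambda>s. HH k N w s / (s - of_nat k))"
  shows "contour_integral (linepath (Complex a (-T)) (Complex b (-T))) f
       + contour_integral (linepath (Complex b (-T)) (Complex b T)) f
       + contour_integral (linepath (Complex b T) (Complex a T)) f
       + contour_integral (linepath (Complex a T) (Complex a (-T))) f
       = 2 * pi * \<i> * HH k N w (of_nat k)"
proof -
  define S where "S = {s. -1/2 < Re s \<and> Re s < real k + 1}"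
  have "S = {s. Re s > -1/2} \<inter> {s. Re s < real k + 1}" unfolding S_def by auto
  hence convS: "convex S" and openS: "open S"
    by (auto intro!: convex_Int convex_halfspace_Re_gt convex_halfspace_Re_lt open_Int open_halfspace_Re_gt open_halfspace_Re_lt)
  have holo: "HH k N w holomorphic_on S" unfolding S_def by (rule HH_holo)
  have kS: "of_nat k \<in> interior S" using openS ab by (simp add: interior_open S_def)
  define z1 z3 where "z1 = Complex a (-T)" and "z3 = Complex b T"
  have pim: "path_image (rectpath z1 z3) \<subseteq> S - {of_nat k}"
    using ab T by (subst path_image_rectpath) (auto simp: z1_def z3_def S_def complex_eq_iff)
  have wind: "winding_number (rectpath z1 z3) (of_nat k) = 1"
    using ab T by (intro winding_number_rectpath) (auto simp: z1_def z3_def in_box_complex_iff)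
  have C: "(f has_contour_integral (2 * pi * \<i> * HH k N w (of_nat k))) (rectpath z1 z3)"
    using Cauchy_integral_formula_convex_simple[OF convS holo kS valid_path_rectpath pim]
    by (simp add: wind f_def)
  have fholo: "f holomorphic_on S - {of_nat k}" unfolding f_def
    by (intro holomorphic_intros holomorphic_on_subset[OF holo]) auto
  have fcont: "continuous_on (S - {of_nat k}) f"
    by (rule holomorphic_on_imp_continuous_on[OF fholo])
  define z2 z4 where "z2 = Complex b (-T)" and "z4 = Complex a T"
  have rp: "rectpath z1 z3 = linepath z1 z2 +++ linepath z2 z3 +++ linepath z3 z4 +++ linepath z4 z1"
    by (simp add: rectpath_def Let_def z1_def z2_def z3_def z4_def)
  have segs: "closed_segment z1 z2 \<subseteq> S - {of_nat k}" "closed_segment z2 z3 \<subseteq> S - {of_nat k}"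
             "closed_segment z3 z4 \<subseteq> S - {of_nat k}" "closed_segment z4 z1 \<subseteq> S - {of_nat k}"
    using pim unfolding rp by (auto simp: path_image_join)
  have hi: "(f has_contour_integral contour_integral (linepath p q) f) (linepath p q)"
    if "closed_segment p q \<subseteq> S - {of_nat k}" for p q
    by (intro has_contour_integral_integral contour_integrable_continuous_linepath
          continuous_on_subset[OF fcont that])
  have J: "(f has_contour_integral (contour_integral (linepath z1 z2) f + (contour_integral (linepath z2 z3) f
       + (contour_integral (linepath z3 z4) f + contour_integral (linepath z4 z1) f)))) (rectpath z1 z3)"
    unfolding rp
    by (intro has_contour_integral_join hi segs valid_path_join valid_path_linepath) auto
  from contour_integral_unique[OF J] contour_integral_unique[OF C] show ?thesis
    by (simp add: z1_def z2_def z3_def z4_def add_ac)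
qed

lemma f_bound:
  fixes a b w B :: real and k N :: nat
  assumes "b \<le> real k + 1/2" and B: "B > 0"
    and HB: "\<forall>s. a \<le> Re s \<and> Re s \<le> b \<longrightarrow> norm (HH k N w s) \<le> B / norm (of_nat k + 1 - s)"
    and s: "a \<le> Re s" "Re s \<le> b" "s \<noteq> of_nat k"
  shows "norm (HH k N w s / (s - of_nat k)) \<le> B / norm (s - of_nat k) ^ 2"
proof -
  have n0: "norm (s - of_nat k) > 0" using s by auto
  have e1: "norm (s - of_nat k) ^ 2 = (Re s - real k)^2 + (Im s)^2" by (simp add: cmod_power2)
  have e2: "norm (of_nat k + 1 - s) ^ 2 = (real k + 1 - Re s)^2 + (Im s)^2" by (simp add: cmod_power2)
  have "(Re s - real k)^2 \<le> (real k + 1 - Re s)^2" using s assms by (simp add: power2_eq_square algebra_simps)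
  hence "norm (s - of_nat k) ^ 2 \<le> norm (of_nat k + 1 - s) ^ 2" using e1 e2 by simp
  hence le: "norm (s - of_nat k) \<le> norm (of_nat k + 1 - s)"
    by (rule power2_le_imp_le) simp
  have "norm (HH k N w s / (s - of_nat k)) = norm (HH k N w s) / norm (s - of_nat k)"
    by (simp add: norm_divide)
  also have "\<dots> \<le> (B / norm (of_nat k + 1 - s)) / norm (s - of_nat k)"
    using HB s by (intro divide_right_mono) auto
  also have "\<dots> \<le> (B / norm (s - of_nat k)) / norm (s - of_nat k)"
    using le n0 B by (intro divide_right_mono divide_left_mono mult_pos_pos) auto
  finally show ?thesis by (simp add: power2_eq_square)
qed

lemma f_cont:
  "continuous_on ({s. -1/2 < Re s \<and> Re s < real k + 1} - {of_nat k}) (\<lambda>s. HH k N w s / (s - of_nat k))"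
  by (intro holomorphic_on_imp_continuous_on holomorphic_intros holomorphic_on_subset[OF HH_holo]) auto

lemma alg4: "(x1::complex) + x2 + x3 + x4 = r \<Longrightarrow> x2 = p \<Longrightarrow> x4 = - q \<Longrightarrow> p - q - r = - (x1 + x3)"
  by (auto simp: algebra_simps)

lemma norm2: assumes "norm (x::complex) \<le> A" "norm y \<le> A" shows "norm (-(x+y)) \<le> A + A"
proof -
  have "norm (-(x+y)) = norm (x+y)" by (rule norm_minus_cancel)
  thus ?thesis using norm_triangle_ineq[of x y] assms by linarith
qed

lemma norm_Complex_diff_same_Im: "norm (Complex q y - Complex p y) = abs (q - p)"
proof -
  have "Complex q y - Complex p y = of_real (q - p)" by (simp add: complex_eq_iff)
  thus ?thesis by (simp only: norm_of_real)
qed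

lemma rect_estimate:
  fixes a b w :: real and k N :: nat
  assumes ab: "-1/2 < a" "a < real k" "real k < b" "b \<le> real k + 1/2"
  defines "f \<equiv> (\<lambda>s. HH k N w s / (s - of_nat k))"
  shows "\<exists>B>0. \<forall>T>0. norm (\<i> * integral {-T..T} (\<lambda>y. f (Complex b y))
            - \<i> * integral {-T..T} (\<lambda>y. f (Complex a y)) - 2 * pi * \<i> * HH k N w (of_nat k))
            \<le> 2 * (b - a) * B / T^2"
proof -
  obtain B where B: "B > 0" "\<forall>s. a \<le> Re s \<and> Re s \<le> b \<longrightarrow> norm (HH k N w s) \<le> B / norm (of_nat k + 1 - s)"
    using HH_bound[of a b k N w] ab by auto
  show ?thesis
  proof (intro exI[of _ B] conjI allI impI)
    show "B > 0" by fact
    fix T :: real assume T: "T > 0"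
    have R: "contour_integral (linepath (Complex a (-T)) (Complex b (-T))) f
       + contour_integral (linepath (Complex b (-T)) (Complex b T)) f
       + contour_integral (linepath (Complex b T) (Complex a T)) f
       + contour_integral (linepath (Complex a T) (Complex a (-T))) f
       = 2 * pi * \<i> * HH k N w (of_nat k)"
      unfolding f_def using ab T by (intro rect_identity) auto
    define S where "S = {s. -1/2 < Re s \<and> Re s < real k + 1} - {of_nat k}"
    have fc: "continuous_on S f" unfolding S_def f_def by (rule f_cont)
    have seg_h: "closed_segment (Complex p y) (Complex q y) = {z. Im z = y \<and> Re z \<in> {p..q}}"
      if "p \<le> q" for p q y using that by (subst closed_segment_same_Im) (auto simp: closed_segment_eq_real_ivl)
    have seg_h': "closed_segment (Complex q y) (Complex p y) = {z. Im z = y \<and> Re z \<in> {p..q}}"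
      if "p \<le> q" for p q y using seg_h[OF that] by (simp add: closed_segment_commute)
    have seg_v: "closed_segment (Complex x (-T)) (Complex x T) = {z. Re z = x \<and> Im z \<in> {-T..T}}" for x
      using T by (subst closed_segment_same_Re) (auto simp: closed_segment_eq_real_ivl)
    have Hb: "norm (contour_integral (linepath (Complex p y) (Complex q y)) f) \<le> B / T^2 * (b - a)"
      if "closed_segment (Complex p y) (Complex q y) = {z. Im z = y \<and> Re z \<in> {a..b}}" "\<bar>y\<bar> = T"
         "norm (Complex q y - Complex p y) = b - a" for p q y
    proof -
      have sub: "closed_segment (Complex p y) (Complex q y) \<subseteq> S"
      proof
        fix z assume "z \<in> closed_segment (Complex p y) (Complex q y)"
        hence z: "Im z = y" "a \<le> Re z" "Re z \<le> b" using that(1) by auto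
        have "z \<noteq> of_nat k" using z that(2) T by auto
        thus "z \<in> S" using z ab unfolding S_def by auto
      qed
      have ci: "f contour_integrable_on linepath (Complex p y) (Complex q y)"
        by (intro contour_integrable_continuous_linepath continuous_on_subset[OF fc sub])
      have "norm (contour_integral (linepath (Complex p y) (Complex q y)) f) \<le> B / T^2 * norm (Complex q y - Complex p y)"
      proof (rule contour_integral_bound_linepath[OF ci])
        show "0 \<le> B / T^2" using B by auto
        fix s assume s: "s \<in> closed_segment (Complex p y) (Complex q y)"
        hence s': "Im s = y" "a \<le> Re s" "Re s \<le> b" using that(1) by auto
        hence sk: "s \<noteq> of_nat k" using that(2) T by auto
        have "norm (f s) \<le> B / norm (s - of_nat k) ^ 2"
          unfolding f_def by (rule f_bound[OF ab(4) B(1) B(2) s'(2) s'(3) sk])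
        also have "\<dots> \<le> B / T^2"
        proof -
          have ty: "T^2 = y^2" using that(2) by (metis power2_abs)
          have "norm (s - of_nat k) ^ 2 = (Re s - real k)^2 + (Im s)^2" by (simp add: cmod_power2)
          hence "T^2 \<le> norm (s - of_nat k) ^ 2" using s'(1) ty by simp
          thus ?thesis using B T by (intro divide_left_mono mult_pos_pos) auto
        qed
        finally show "norm (f s) \<le> B / T^2" .
      qed
      thus ?thesis using that(3) by simp
    qed
    have h1: "norm (contour_integral (linepath (Complex a (-T)) (Complex b (-T))) f) \<le> B / T^2 * (b - a)"
    proof -
      have abl: "a \<le> b" using ab by linarith
      have n1: "norm (Complex b (-T) - Complex a (-T)) = b - a" using abl by (simp add: norm_Complex_diff_same_Im)
      have tt: "\<bar>-T\<bar> = T" using T by simp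
      show ?thesis by (rule Hb[OF seg_h[OF abl] tt n1])
    qed
    have h3: "norm (contour_integral (linepath (Complex b T) (Complex a T)) f) \<le> B / T^2 * (b - a)"
    proof -
      have abl: "a \<le> b" using ab by linarith
      have n1: "norm (Complex a T - Complex b T) = b - a" using abl
        by (simp add: norm_Complex_diff_same_Im)
      have tt: "\<bar>T\<bar> = T" using T by simp
      show ?thesis by (rule Hb[OF seg_h'[OF abl] tt n1])
    qed
    have v2: "contour_integral (linepath (Complex b (-T)) (Complex b T)) f = \<i> * integral {-T..T} (\<lambda>y. f (Complex b y))"
      using T by (intro contour_integral_linepath_same_Re) auto
    have v4: "contour_integral (linepath (Complex a T) (Complex a (-T))) f = - (\<i> * integral {-T..T} (\<lambda>y. f (Complex a y)))"
    proof -
      have sub: "closed_segment (Complex a (-T)) (Complex a T) \<subseteq> S"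
      proof
        fix z assume "z \<in> closed_segment (Complex a (-T)) (Complex a T)"
        hence z: "Re z = a" unfolding seg_v by auto
        have "z \<noteq> of_nat k" using z ab by auto
        thus "z \<in> S" using z ab unfolding S_def by auto
      qed
      have "contour_integral (linepath (Complex a (-T)) (Complex a T)) f = - contour_integral (linepath (Complex a T) (Complex a (-T))) f"
        by (intro contour_integral_reverse_linepath continuous_on_subset[OF fc sub])
      moreover have "contour_integral (linepath (Complex a (-T)) (Complex a T)) f = \<i> * integral {-T..T} (\<lambda>y. f (Complex a y))"
        using T by (intro contour_integral_linepath_same_Re) auto
      ultimately show ?thesis by simp
    qed
    have "\<i> * integral {-T..T} (\<lambda>y. f (Complex b y)) - \<i> * integral {-T..T} (\<lambda>y. f (Complex a y)) - 2 * pi * \<i> * HH k N w (of_nat k)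
        = - (contour_integral (linepath (Complex a (-T)) (Complex b (-T))) f + contour_integral (linepath (Complex b T) (Complex a T)) f)"
      by (rule alg4[OF R v2 v4])
    also have "norm \<dots> \<le> B / T^2 * (b - a) + B / T^2 * (b - a)"
      by (rule norm2[OF h1 h3])
    finally show "norm (\<i> * integral {-T..T} (\<lambda>y. f (Complex b y))
            - \<i> * integral {-T..T} (\<lambda>y. f (Complex a y)) - 2 * pi * \<i> * HH k N w (of_nat k))
            \<le> 2 * (b - a) * B / T^2" by (simp add: field_simps)
  qed
qed

lemma integrable_inv_sq: "integrable lborel (\<lambda>y::real. inverse (1 + y^2))"
  using integrable_inverse_1_plus_square by (simp add: set_integrable_def einterval_eq_UNIV)

lemma line_cont:
  assumes "-1/2 < x" "x < real k + 1" "x \<noteq> real k"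
  shows "continuous_on UNIV (\<lambda>y. HH k N w (Complex x y) / (Complex x y - of_nat k))"
proof -
  have "continuous_on UNIV (\<lambda>y::real. Complex x y)"
    by (simp add: Complex_eq continuous_intros)
  moreover have "(\<lambda>y. Complex x y) ` UNIV \<subseteq> {s. -1/2 < Re s \<and> Re s < real k + 1} - {of_nat k}"
    using assms by (auto simp: complex_eq_iff)
  ultimately show ?thesis
    by (rule continuous_on_compose2[OF f_cont])
qed

lemma line_integrable:
  assumes "-1/2 < x" "x \<le> real k + 1/2" "x \<noteq> real k"
  shows "integrable lborel (\<lambda>y. HH k N w (Complex x y) / (Complex x y - of_nat k))"
proof -
  obtain B where B: "B > 0" "\<forall>s. x \<le> Re s \<and> Re s \<le> x \<longrightarrow> norm (HH k N w s) \<le> B / norm (of_nat k + 1 - s)"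
    using HH_bound[of x x k N w] assms by auto
  define d where "d = min 1 ((x - real k)^2)"
  have d: "d > 0" "d \<le> 1" "d \<le> (x - real k)^2" using assms by (auto simp: d_def)
  show ?thesis
  proof (rule Bochner_Integration.integrable_bound)
    show "integrable lborel (\<lambda>y. B / d * inverse (1 + y^2))"
      by (intro integrable_mult_right integrable_inv_sq)
    show "(\<lambda>y. HH k N w (Complex x y) / (Complex x y - of_nat k)) \<in> borel_measurable lborel"
    proof -
      have c: "continuous_on UNIV (\<lambda>y. HH k N w (Complex x y) / (Complex x y - of_nat k))"
        using line_cont[of x k N w] assms by auto
      show ?thesis using borel_measurable_continuous_onI[OF c] by simp
    qed
    show "AE y in lborel. norm (HH k N w (Complex x y) / (Complex x y - of_nat k)) \<le> norm (B / d * inverse (1 + y^2))"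
    proof (rule AE_I2)
      fix y :: real
      have sk: "Complex x y \<noteq> of_nat k" using assms by (auto simp: complex_eq_iff)
      have "norm (HH k N w (Complex x y) / (Complex x y - of_nat k)) \<le> B / norm (Complex x y - of_nat k) ^ 2"
        by (rule f_bound[OF assms(2) B(1) B(2)]) (use sk in auto)
      also have "norm (Complex x y - of_nat k) ^ 2 = (x - real k)^2 + y^2" by (simp add: cmod_power2)
      also have "B / ((x - real k)^2 + y^2) \<le> B / (d * (1 + y^2))"
      proof (rule divide_left_mono)
        have "d * (1 + y^2) = d + d * y^2" by (simp add: algebra_simps)
        also have "\<dots> \<le> (x - real k)^2 + y^2" using d
          by (intro add_mono) (auto intro: mult_left_le_one_le)
        finally show "d * (1 + y^2) \<le> (x - real k)^2 + y^2" .
        show "0 \<le> B" using B by simp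
        show "0 < ((x - real k)^2 + y^2) * (d * (1 + y^2))" using d sk
          by (intro mult_pos_pos add_pos_nonneg) (auto simp: complex_eq_iff)
      qed
      also have "\<dots> = norm (B / d * inverse (1 + y^2))" using B d
        by (simp add: field_simps abs_of_pos add_pos_nonneg)
      finally show "norm (HH k N w (Complex x y) / (Complex x y - of_nat k)) \<le> norm (B / d * inverse (1 + y^2))" .
    qed
  qed
qed

lemma interval_limit:
  fixes g :: "real \<Rightarrow> complex"
  assumes g: "integrable lborel g"
  shows "(\<lambda>n. integral {-real n..real n} g) \<longlonglongrightarrow> (LINT y|lborel. g y)"
proof -
  have si: "set_integrable lborel {-real n..real n} g" for n
    unfolding set_integrable_def by (intro integrable_mult_indicator g) auto
  have eq: "integral {-real n..real n} g = (LINT y|lborel. indicator {-real n..real n} y *\<^sub>R g y)" for n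
    using set_borel_integral_eq_integral(2)[OF si[of n]] by (simp add: set_lebesgue_integral_def)
  show ?thesis unfolding eq
  proof (rule integral_dominated_convergence[where w = "\<lambda>y. norm (g y)"])
    show "g \<in> borel_measurable lborel" using g by auto
    show "(\<lambda>y. indicator {-real n..real n} y *\<^sub>R g y) \<in> borel_measurable lborel" for n
      using g by auto
    show "integrable lborel (\<lambda>y. norm (g y))" using g by auto
    show "AE y in lborel. (\<lambda>n. indicator {-real n..real n} y *\<^sub>R g y) \<longlonglongrightarrow> g y"
    proof (rule AE_I2)
      fix y :: real
      obtain m :: nat where m: "\<bar>y\<bar> \<le> real m" using real_arch_simple by blast
      have "eventually (\<lambda>n. indicator {-real n..real n} y *\<^sub>R g y = g y) sequentially"
        using eventually_ge_at_top[of m]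
        by eventually_elim (use m in \<open>auto simp: indicator_def abs_le_iff\<close>)
      thus "(\<lambda>n. indicator {-real n..real n} y *\<^sub>R g y) \<longlonglongrightarrow> g y"
        by (rule tendsto_eventually)
    qed
    show "AE y in lborel. norm (indicator {-real n..real n} y *\<^sub>R g y) \<le> norm (g y)" for n
      by (rule AE_I2) (auto simp: indicator_def)
  qed
qed

lemma shift_tmp:
  fixes a b w :: real and k N :: nat
  assumes ab: "-1/2 < a" "a < real k" "real k < b" "b \<le> real k + 1/2"
  shows "\<exists>B>0. \<forall>T>0. norm (\<i> * integral {-T..T} (\<lambda>y. HH k N w (Complex b y) / (Complex b y - of_nat k))
            - \<i> * integral {-T..T} (\<lambda>y. HH k N w (Complex a y) / (Complex a y - of_nat k)) - 2 * pi * \<i> * HH k N w (of_nat k))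
            \<le> 2 * (b - a) * B / T^2"
  using rect_estimate[OF ab, of N w] by simp

lemma lim_inv_sq: "(\<lambda>n. C / (real n)^2) \<longlonglongrightarrow> 0"
proof (rule tendsto_divide_0[OF tendsto_const])
  show "filterlim (\<lambda>n. (real n)^2) at_infinity sequentially"
    by (intro filterlim_at_top_imp_at_infinity filterlim_pow_at_top filterlim_real_sequentially) auto
qed

lemma dfact_step: "dfact (2 * Suc k - 1) = (2 * k + 1) * dfact (2 * k - 1)"
  by (cases k) (auto simp: numeral_2_eq_2)

lemma Gamma_half_dfact: "Gamma (real k + 1/2) * 2 ^ k = sqrt pi * real (dfact (2 * k - 1))"
proof (induction k)
  case 0 thus ?case by (simp add: Gamma_one_half_real)
next
  case (Suc k)
  have nn: "real k + 1/2 \<notin> \<int>\<^sub>\<le>\<^sub>0" by (auto elim!: nonpos_Ints_cases)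
  have "Gamma (real (Suc k) + 1/2) = (real k + 1/2) * Gamma (real k + 1/2)"
    using Gamma_plus1[OF nn] by (simp add: add_ac)
  hence "Gamma (real (Suc k) + 1/2) * 2 ^ Suc k = (2 * real k + 1) * (Gamma (real k + 1/2) * 2 ^ k)"
    by (simp add: algebra_simps)
  also have "\<dots> = sqrt pi * real (dfact (2 * Suc k - 1))"
    using Suc.IH by (simp only: dfact_step) (simp add: algebra_simps)
  finally show ?case .
qed

lemma exp_half: assumes "w > 0" shows "exp ((real k + 1/2) * ln w) = w ^ k * sqrt w"
proof -
  have "exp ((real k + 1/2) * ln w) = w powr (real k + 1/2)" using assms by (simp add: powr_def)
  also have "\<dots> = w powr real k * w powr (1/2)" by (rule powr_add)
  also have "\<dots> = w ^ k * sqrt w" using assms by (simp add: powr_realpow powr_half_sqrt)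
  finally show ?thesis .
qed

lemma shift:
  fixes a b w :: real and k N :: nat
  assumes ab: "-1/2 < a" "a < real k" "real k < b" "b \<le> real k + 1/2"
  shows "(LINT y|lborel. HH k N w (Complex a y) / (Complex a y - of_nat k))
       = (LINT y|lborel. HH k N w (Complex b y) / (Complex b y - of_nat k)) - 2 * pi * HH k N w (of_nat k)"
proof -
  define fa where "fa = (\<lambda>y. HH k N w (Complex a y) / (Complex a y - of_nat k))"
  define fb where "fb = (\<lambda>y. HH k N w (Complex b y) / (Complex b y - of_nat k))"
  define H where "H = HH k N w (of_nat k)"
  obtain B where B: "B > 0" "\<forall>T>0. norm (\<i> * integral {-T..T} fb - \<i> * integral {-T..T} fa - 2 * pi * \<i> * H) \<le> 2 * (b - a) * B / T^2"
    using shift_tmp[OF ab, of N w] unfolding fa_def fb_def H_def by blast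
  have la: "(\<lambda>n. integral {-real n..real n} fa) \<longlonglongrightarrow> (LINT y|lborel. fa y)"
    unfolding fa_def by (intro interval_limit line_integrable) (use ab in auto)
  have lb: "(\<lambda>n. integral {-real n..real n} fb) \<longlonglongrightarrow> (LINT y|lborel. fb y)"
    unfolding fb_def by (intro interval_limit line_integrable) (use ab in auto)
  define u where "u = (\<lambda>n. \<i> * integral {-real n..real n} fb - \<i> * integral {-real n..real n} fa - 2 * pi * \<i> * H)"
  have u1: "u \<longlonglongrightarrow> \<i> * (LINT y|lborel. fb y) - \<i> * (LINT y|lborel. fa y) - 2 * pi * \<i> * H"
    unfolding u_def by (intro tendsto_intros la lb)
  have u0: "u \<longlonglongrightarrow> 0"
  proof (rule Lim_null_comparison[OF _ lim_inv_sq[of "2 * (b - a) * B"]])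
    show "eventually (\<lambda>n. norm (u n) \<le> 2 * (b - a) * B / (real n)^2) sequentially"
      using eventually_ge_at_top[of "1::nat"]
    proof eventually_elim
      case (elim n)
      hence "real n > 0" by simp
      thus ?case using B(2) unfolding u_def by auto
    qed
  qed
  from LIMSEQ_unique[OF u1 u0]
  have "\<i> * ((LINT y|lborel. fb y) - (LINT y|lborel. fa y) - 2 * pi * H) = 0"
    by (simp add: algebra_simps)
  hence "(LINT y|lborel. fb y) - (LINT y|lborel. fa y) - 2 * pi * H = 0" by simp
  hence "(LINT y|lborel. fa y) = (LINT y|lborel. fb y) - 2 * pi * H"
    by (simp add: algebra_simps)
  thus ?thesis unfolding fa_def fb_def H_def .
qed

lemma integrand_eq:
  fixes t c :: real and s :: complex
  assumes t: "t > 0" and c: "Re s < real k"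
  shows "Gamma (1/2 + s) ^ N * Gamma (1 - (1 - of_nat k) - s) * complex_of_real (1 / (2^N * t)) powr (- s)
       = - (HH k N (2^N * t) s / (s - of_nat k))"
proof -
  have nn: "of_nat k - s \<notin> \<int>\<^sub>\<le>\<^sub>0" using c by (intro Re_pos_not_nonpos_Ints) simp
  have sk: "s - of_nat k \<noteq> 0" using c by auto
  have g: "Gamma (of_nat k + 1 - s) = (of_nat k - s) * Gamma (of_nat k - s)"
    using Gamma_plus1[OF nn] by (simp add: algebra_simps)
  have pos: "1 / (2^N * t) > (0::real)" using t by simp
  have p: "complex_of_real (1 / (2^N * t)) powr (- s) = exp (s * of_real (ln (2^N * t)))"
  proof -
    have "complex_of_real (1 / (2^N * t)) powr (- s) = exp (- s * ln (complex_of_real (1 / (2^N * t))))"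
      using pos t by (simp add: powr_def)
    also have "ln (complex_of_real (1 / (2^N * t))) = of_real (ln (1 / (2^N * t)))"
      using pos by (rule Ln_of_real)
    also have "ln (1 / (2^N * t)) = - ln (2^N * t)" using t by (simp add: ln_div)
    finally show ?thesis by simp
  qed
  show ?thesis
    unfolding HH_def p g using sk by (simp add: field_simps)
qed

lemma integrand_eq':
  fixes t :: real and s :: complex
  assumes t: "t > 0" and c: "Re s < real k"
  shows "Gamma (1/2 + s) ^ N * Gamma (of_nat k - s) * (1 / (2^N * complex_of_real t)) powr (- s)
       = - (HH k N (2^N * t) s / (s - of_nat k))"
  using integrand_eq[OF t c, of N] by simp

lemma H_val:
  assumes "w > 0"
  shows "HH k N w (of_nat k) = complex_of_real (Gamma (real k + 1/2) ^ N * w ^ k)"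
proof -
  have "(1/2 + of_nat k :: complex) = of_real (real k + 1/2)" by simp
  hence g: "Gamma (1/2 + of_nat k :: complex) = of_real (Gamma (real k + 1/2))"
    by (simp only: Gamma_complex_of_real)
  have e: "exp (of_nat k * complex_of_real (ln w)) = of_real (w ^ k)"
  proof -
    have "exp (of_nat k * complex_of_real (ln w)) = of_real (exp (real k * ln w))"
      by (simp flip: exp_of_real)
    also have "exp (real k * ln w) = w ^ k" using assms by (simp add: exp_of_nat_mult)
    finally show ?thesis .
  qed
  show ?thesis unfolding HH_def g e by simp
qed

lemma HH_w: "HH k N w s = HH k N 1 s * exp (s * of_real (ln w))"
  by (simp add: HH_def)

theorem corollary1:
  fixes k N :: nat and c :: real
  assumes "N \<ge> 1"
    and "-1/2 < c" and "c < real k"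
  shows "((\<lambda>t::real. meijerG_line N 1 1 N (\<lambda>_. 1 - of_nat k) (\<lambda>_. 1/2) c (1 / (2 ^ N * t))
                      / complex_of_real (t ^ k))
          \<longlongrightarrow> complex_of_real ((sqrt pi * real (dfact (2 * k - 1))) ^ N)) (at_right 0)"
proof -
  define b where "b = real k + 1/2"
  have bk: "real k < b" "b \<le> real k + 1/2" by (auto simp: b_def)
  define f1 where "f1 = (\<lambda>y. HH k N 1 (Complex b y) / (Complex b y - of_nat k))"
  define K where "K = (LINT y|lborel. norm (f1 y))"
  define C0 where "C0 = complex_of_real ((sqrt pi * real (dfact (2 * k - 1))) ^ N)"
  define L where "L = (\<lambda>w. LINT y|lborel. HH k N w (Complex b y) / (Complex b y - of_nat k))"
  define R where "R = (\<lambda>t. L (2^N * t) / complex_of_real (2 * pi) / complex_of_real (t ^ k))"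
  have eq: "meijerG_line N 1 1 N (\<lambda>_. 1 - of_nat k) (\<lambda>_. 1/2) c (1 / (2 ^ N * t)) / complex_of_real (t ^ k)
            = C0 - R t" if t: "t > 0" for t
  proof -
    define w where "w = (2::real)^N * t"
    have w: "w > 0" using t by (simp add: w_def)
    have int: "meijerG_line N 1 1 N (\<lambda>_. 1 - of_nat k) (\<lambda>_. 1/2) c (1 / (2 ^ N * t))
          = (LINT y|lborel. - (HH k N w (Complex c y) / (Complex c y - of_nat k))) / complex_of_real (2 * pi)"
      unfolding meijerG_line_def w_def
      by (intro arg_cong[where f = "\<lambda>x. x / complex_of_real (2 * pi)"] Bochner_Integration.integral_cong refl)
         (use t assms in \<open>simp add: integrand_eq' Let_def\<close>)
    also have "\<dots> = - (L w - 2 * pi * HH k N w (of_nat k)) / complex_of_real (2 * pi)"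
      using shift[of c k b N w] assms bk unfolding L_def by simp
    also have "\<dots> = HH k N w (of_nat k) - L w / complex_of_real (2 * pi)"
      by (simp add: field_simps)
    finally have m: "meijerG_line N 1 1 N (\<lambda>_. 1 - of_nat k) (\<lambda>_. 1/2) c (1 / (2 ^ N * t))
          = HH k N w (of_nat k) - L w / complex_of_real (2 * pi)" .
    have h: "HH k N w (of_nat k) / complex_of_real (t ^ k) = C0"
    proof -
      have "HH k N w (of_nat k) = complex_of_real (Gamma (real k + 1/2) ^ N * w ^ k)"
        by (rule H_val[OF w])
      also have "Gamma (real k + 1/2) ^ N * w ^ k = (Gamma (real k + 1/2) * 2 ^ k) ^ N * t ^ k"
      proof -
        have "w ^ k = (2 ^ k) ^ N * t ^ k" unfolding w_def
          by (simp add: power_mult_distrib power_mult[symmetric] mult.commute)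
        thus ?thesis by (simp add: power_mult_distrib)
      qed
      also have "\<dots> = (sqrt pi * real (dfact (2 * k - 1))) ^ N * t ^ k"
        by (simp only: Gamma_half_dfact)
      finally show ?thesis using t unfolding C0_def by simp
    qed
    have "meijerG_line N 1 1 N (\<lambda>_. 1 - of_nat k) (\<lambda>_. 1/2) c (1 / (2 ^ N * t)) / complex_of_real (t ^ k)
        = (HH k N w (of_nat k) - L w / complex_of_real (2 * pi)) / complex_of_real (t ^ k)"
      by (simp only: m)
    also have "\<dots> = HH k N w (of_nat k) / complex_of_real (t ^ k) - L w / complex_of_real (2 * pi) / complex_of_real (t ^ k)"
      by (rule diff_divide_distrib)
    also have "\<dots> = C0 - R t" by (simp only: h R_def w_def[symmetric])
    finally show ?thesis .
  qed
  have R0: "(R \<longlongrightarrow> 0) (at_right 0)"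
  proof (rule Lim_null_comparison)
    show "eventually (\<lambda>t. norm (R t) \<le> K * (2^N)^k * sqrt (2^N * t) / (2 * pi)) (at_right 0)"
      using eventually_at_right_less[of "0::real"]
    proof eventually_elim
      case (elim t)
      define w where "w = (2::real)^N * t"
      have w: "w > 0" using elim by (simp add: w_def)
      have nb: "norm (HH k N w (Complex b y) / (Complex b y - of_nat k)) = norm (f1 y) * (w ^ k * sqrt w)" for y
      proof -
        have "norm (exp (Complex b y * complex_of_real (ln w))) = exp (b * ln w)" by simp
        also have "\<dots> = w ^ k * sqrt w" unfolding b_def by (rule exp_half[OF w])
        finally show ?thesis unfolding f1_def
          by (subst HH_w) (simp add: norm_mult norm_divide)
      qed
      have "norm (L w) \<le> (LINT y|lborel. norm (f1 y) * (w ^ k * sqrt w))"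
        unfolding L_def nb[symmetric] by (rule integral_norm_bound)
      also have "\<dots> = K * (w ^ k * sqrt w)" unfolding K_def by simp
      finally have nL: "norm (L w) \<le> K * (w ^ k * sqrt w)" .
      have "norm (R t) = norm (L w) / (2 * pi) / t ^ k"
      proof -
        have "norm (complex_of_real (2 * pi)) = 2 * pi" by simp
        moreover have "norm (complex_of_real (t ^ k)) = t ^ k" using elim by (simp only: norm_of_real) simp
        ultimately show ?thesis unfolding R_def w_def by (simp only: norm_divide)
      qed
      also have "\<dots> \<le> K * (w ^ k * sqrt w) / (2 * pi) / t ^ k"
        using nL elim by (intro divide_right_mono) auto
      also have "\<dots> = K * (2^N)^k * sqrt (2^N * t) / (2 * pi)"
        unfolding w_def using elim by (simp add: power_mult_distrib field_simps)
      finally show ?case .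
    qed
    have "((\<lambda>t. K * (2^N)^k * sqrt (2^N * t) / (2 * pi)) \<longlongrightarrow> K * (2^N)^k * sqrt (2^N * 0) / (2 * pi)) (at_right (0::real))"
      by (intro tendsto_intros tendsto_ident_at) simp
    thus "((\<lambda>t. K * (2^N)^k * sqrt (2^N * t) / (2 * pi)) \<longlongrightarrow> 0) (at_right (0::real))" by simp
  qed
  have "((\<lambda>t. C0 - R t) \<longlongrightarrow> C0 - 0) (at_right 0)"
    by (intro tendsto_intros R0)
  hence "((\<lambda>t. C0 - R t) \<longlongrightarrow> C0) (at_right 0)" by simp
  moreover have "eventually (\<lambda>t. C0 - R t = meijerG_line N 1 1 N (\<lambda>_. 1 - of_nat k) (\<lambda>_. 1/2) c (1 / (2 ^ N * t)) / complex_of_real (t ^ k)) (at_right 0)"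
    using eventually_at_right_less[of "0::real"] by eventually_elim (rule eq[symmetric])
  ultimately show ?thesis unfolding C0_def by (rule Lim_transform_eventually)
qed

end
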